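(* Let $G$ be a graph, $k$ a positive integer and $\mathbb{F}$ a field whose characteristic is either $0$ or a positive number not dividing $k$. Suppose the polynomials $y_v^k - 1$ ($v\in V(G)$) and $\sum_{j=0}^{k-1} y_u^{j} y_v^{k-1-j}$ ($\{u,v\}\in E(G)$) have a polynomial calculus refutation of degree $d$ over $\mathbb{F}$. Then $\mathbb{F}$ can be extended to a field $\mathbb{E}$ containing a primitive $k$th root of unity $w$, and the polynomials $$\sum_{j=1}^{k} x_{v,j} - 1 \ (v \in V(G)),\qquad x_{v,j}x_{v,j'} \ (v \in V(G),\ j\neq j' \in [k]),\qquad x_{u,j}x_{v,j}\ (\{u,v\} \in E(G),\ j \in [k])$$ have a polynomial calculus refutation over $\mathbb{E}$ of degree $\max\{2k,d\}$.
   Context: Polynomial calculus over a field $\mathbb{F}$: a derivation of $r$ from a set $S$ of polynomials is a sequence $p_1,\dots,p_\tau=r$ in which each $p_t$ is an element of $S$, a linear combination $\alpha p_i+\beta p_j$ ($i,j<t$, $\alpha,\beta$ field elements), a product $x p_i$ ($i<t$, $x$ a variable), or (for the system in the $\{0,1\}$-variables $x_{v,j}$) a Boolean axiom $x^2-x$. For the system in the variables $y_v$ no Boolean axioms are used. A refutation is a derivation of $1$; its degree is the maximum total degree of its polynomials. *)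

theory Defs
  imports "HOL-Library.Poly_Mapping" "HOL-Algebra.Algebraic_Closure_Type"
begin

type_synonym ('v, 'a) mpoly = "('v \<Rightarrow>\<^sub>0 nat) \<Rightarrow>\<^sub>0 'a"

definition mconst :: "'a::comm_ring_1 \<Rightarrow> ('v, 'a) mpoly" where
  "mconst c = Poly_Mapping.single 0 c"

definition mvar :: "'v \<Rightarrow> ('v, 'a::comm_ring_1) mpoly" where
  "mvar x = Poly_Mapping.single (Poly_Mapping.single x 1) 1"

definition mon_deg :: "('v \<Rightarrow>\<^sub>0 nat) \<Rightarrow> nat" where
  "mon_deg m = (\<Sum>x\<in>Poly_Mapping.keys m. Poly_Mapping.lookup m x)"

definition tdeg :: "('v, 'a::comm_ring_1) mpoly \<Rightarrow> nat" where
  "tdeg p = (if Poly_Mapping.keys p = {} then 0 else Max (mon_deg ` Poly_Mapping.keys p))"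

definition pc_step :: "bool \<Rightarrow> ('v, 'a::comm_ring_1) mpoly set \<Rightarrow> ('v, 'a) mpoly list
    \<Rightarrow> ('v, 'a) mpoly \<Rightarrow> bool" where
  "pc_step boolax S prev p \<longleftrightarrow>
     p \<in> S
   \<or> (\<exists>q\<in>set prev. \<exists>r\<in>set prev. \<exists>\<alpha> \<beta>. p = mconst \<alpha> * q + mconst \<beta> * r)
   \<or> (\<exists>q\<in>set prev. \<exists>x. p = mvar x * q)
   \<or> (boolax \<and> (\<exists>x. p = mvar x ^ 2 - mvar x))"

definition pc_derivation :: "bool \<Rightarrow> ('v, 'a::comm_ring_1) mpoly set \<Rightarrow> ('v, 'a) mpoly list \<Rightarrow> bool" where
  "pc_derivation boolax S ps \<longleftrightarrow> (\<forall>t<length ps. pc_step boolax S (take t ps) (ps ! t))"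

definition pc_refutation :: "bool \<Rightarrow> ('v, 'a::comm_ring_1) mpoly set \<Rightarrow> nat \<Rightarrow> bool" where
  "pc_refutation boolax S d \<longleftrightarrow>
     (\<exists>ps. pc_derivation boolax S ps \<and> ps \<noteq> [] \<and> last ps = 1 \<and> (\<forall>p\<in>set ps. tdeg p \<le> d))"

definition primitive_root_of_unity :: "nat \<Rightarrow> 'a::comm_ring_1 \<Rightarrow> bool" where
  "primitive_root_of_unity k w \<longleftrightarrow> w ^ k = 1 \<and> (\<forall>j. 0 < j \<and> j < k \<longrightarrow> w ^ j \<noteq> 1)"

definition simple_graph :: "'v set \<Rightarrow> 'v set set \<Rightarrow> bool" where
  "simple_graph V E \<longleftrightarrow> finite V \<and> (\<forall>e\<in>E. e \<subseteq> V \<and> card e = 2)"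

text \<open>The k-colouring system in the y-variables (roots-of-unity encoding).\<close>
definition y_system :: "'v set \<Rightarrow> 'v set set \<Rightarrow> nat \<Rightarrow> ('v, 'a::comm_ring_1) mpoly set" where
  "y_system V E k =
     {mvar v ^ k - 1 | v. v \<in> V}
   \<union> {\<Sum>j<k. mvar u ^ j * mvar v ^ (k - 1 - j) | u v. {u, v} \<in> E}"

text \<open>The k-colouring system in the boolean variables x_{v,j}, j \<in> {1..k}.\<close>
definition x_system :: "'v set \<Rightarrow> 'v set set \<Rightarrow> nat \<Rightarrow> ('v \<times> nat, 'a::comm_ring_1) mpoly set" where
  "x_system V E k =
     {(\<Sum>j\<in>{1..k}. mvar (v, j)) - 1 | v. v \<in> V}
   \<union> {mvar (v, j) * mvar (v, j') | v j j'. v \<in> V \<and> j \<in> {1..k} \<and> j' \<in> {1..k} \<and> j \<noteq> j'}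
   \<union> {mvar (u, j) * mvar (v, j) | u v j. {u, v} \<in> E \<and> j \<in> {1..k}}"

end

theory Submission
  imports Defs
begin


lemma prim_dvd:
  assumes "primitive_root_of_unity m (w::'b::comm_ring_1)" "m > 0" "w ^ j = 1"
  shows "m dvd j"
proof (rule ccontr)
  assume nd: "\<not> m dvd j"
  have a: "j mod m \<noteq> 0" using nd mod_0_imp_dvd by blast
  have b: "j mod m < m" using assms(2) by simp
  have "w ^ j = w ^ (m * (j div m) + j mod m)" by (simp only: mult_div_mod_eq)
  also have "\<dots> = (w ^ m) ^ (j div m) * w ^ (j mod m)" by (simp only: power_add power_mult)
  finally have "w ^ (j mod m) = 1" using assms(1,3) by (simp add: primitive_root_of_unity_def)
  thus False using assms(1) a b by (simp add: primitive_root_of_unity_def)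
qed

lemma pow_gcd_one:
  assumes "(x::'b::comm_ring_1) ^ a = 1" "x ^ b = 1"
  shows "x ^ gcd a b = 1"
proof (cases "a = 0")
  case True thus ?thesis using assms by simp
next
  case False
  then obtain s r where sr: "a * s = b * r + gcd a b" using bezout_nat by blast
  have "1 = x ^ (a * s)" using assms by (simp add: power_mult)
  also have "\<dots> = (x ^ b) ^ r * x ^ gcd a b" by (simp add: sr power_add power_mult)
  finally show ?thesis using assms by simp
qed

lemma prim_step:
  assumes p: "prime (p::nat)" and w: "primitive_root_of_unity m (w::'b::comm_ring_1)" and m: "m > 0"
    and z: "z ^ p = w" and zm: "z ^ m \<noteq> 1"
  shows "primitive_root_of_unity (p * m) z"
  unfolding primitive_root_of_unity_def
proof (intro conjI allI impI)
  show "z ^ (p * m) = 1" using w z by (simp add: power_mult primitive_root_of_unity_def)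
  fix j assume j: "0 < j \<and> j < p * m"
  show "z ^ j \<noteq> 1"
  proof
    assume zj: "z ^ j = 1"
    have "w ^ j = 1" using zj z by (metis mult.commute power_mult power_one)
    hence "m dvd j" using prim_dvd[OF w m] by blast
    then obtain t where t: "j = m * t" by blast
    have "0 < t" "t < p" using j t m by auto
    hence cop: "gcd t p = 1" using p using p by (metis coprime_commute coprime_iff_gcd_eq_1 prime_imp_coprime nat_dvd_not_less)
    have "(z ^ m) ^ t = 1" using zj t by (simp add: power_mult)
    moreover have "(z ^ m) ^ p = 1" using w z by (metis mult.commute power_mult primitive_root_of_unity_def)
    ultimately have "(z ^ m) ^ gcd t p = 1" by (rule pow_gcd_one)
    thus False using cop zm by simp
  qed
qed

lemma prim_root_exists:
  "(k::nat) > 0 \<Longrightarrow> of_nat k \<noteq> (0::'b::alg_closed_field) \<Longrightarrow> \<exists>w::'b. primitive_root_of_unity k w"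
proof (induction k rule: less_induct)
  case (less k)
  show ?case
  proof (cases "k = 1")
    case True
    show ?thesis by (rule exI[of _ 1]) (auto simp: True primitive_root_of_unity_def)
  next
    case False
    then obtain p where p: "prime p" "p dvd k" using prime_factor_nat by blast
    define m where "m = k div p"
    have km: "k = p * m" using p m_def by simp
    have p2: "p \<ge> 2" using p prime_ge_2_nat by blast
    have m0: "m > 0" using km less.prems by (metis gr0I mult_0_right)
    have mk: "m < k" using km p2 m0 by (metis One_nat_def less_1_mult lessI less_le_trans mult.commute mult_1 numeral_2_eq_2 nat_mult_less_cancel1)
    have ofm: "of_nat m \<noteq> (0::'b)" and ofp: "of_nat p \<noteq> (0::'b)" using less.prems km by auto
    obtain w :: 'b where w: "primitive_root_of_unity m w" using less.IH[OF mk m0 ofm] by blast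
    obtain z :: 'b where z: "z ^ p = w" using nth_root_exists[of p w] p2 by auto
    show ?thesis
    proof (cases "z ^ m = 1")
      case False
      thus ?thesis using prim_step[OF p(1) w m0 z] km by blast
    next
      case True
      have npm: "\<not> p dvd m"
      proof
        assume "p dvd m"
        then obtain m' where m': "m = p * m'" by blast
        have "0 < m'" using m' m0 by (metis gr0I mult_0_right)
        moreover have "m' < m" using m' p2 \<open>0 < m'\<close> by (metis One_nat_def less_1_mult lessI less_le_trans mult.commute mult_1 numeral_2_eq_2 nat_mult_less_cancel1)
        moreover have "w ^ m' = 1" using True z m' by (simp add: power_mult)
        ultimately show False using w by (auto simp: primitive_root_of_unity_def)
      qed
      have cop: "gcd p m = 1" using npm p(1) by (metis coprime_iff_gcd_eq_1 prime_imp_coprime)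
      obtain \<zeta> :: 'b where zeta: "(\<Sum>i\<le>p - 1. (\<lambda>_. 1) i * \<zeta> ^ i) = 0"
        using alg_closed[of "p - 1" "\<lambda>_. (1::'b)"] p2 by auto
      have "{..p - 1} = {..<p}" using p2 by auto
      hence zs: "(\<Sum>i<p. \<zeta> ^ i) = 0" using zeta by simp
      hence zp: "\<zeta> ^ p = 1" using power_diff_1_eq[of \<zeta> p] by simp
      have zn1: "\<zeta> \<noteq> 1" using zs ofp by auto
      have "\<zeta> ^ m \<noteq> 1"
      proof
        assume "\<zeta> ^ m = 1"
        hence "\<zeta> ^ gcd p m = 1" using pow_gcd_one zp by blast
        thus False using cop zn1 by simp
      qed
      hence "(z * \<zeta>) ^ m \<noteq> 1" using True by (simp add: power_mult_distrib)
      moreover have "(z * \<zeta>) ^ p = w" using z zp by (simp add: power_mult_distrib)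
      ultimately show ?thesis using prim_step[OF p(1) w m0] km by blast
    qed
  qed
qed




lemma mconst_0[simp]: "mconst 0 = 0" by (simp add: mconst_def)
lemma mconst_1[simp]: "mconst 1 = 1" by (simp add: mconst_def)
lemma mconst_add: "mconst (a + b) = mconst a + mconst b" by (simp add: mconst_def single_add)
lemma mconst_mult: "mconst (a * b) = mconst a * mconst b" by (simp add: mconst_def mult_single)
lemma mconst_uminus: "mconst (- a) = - mconst a" by (simp add: mconst_def single_uminus)
lemma mconst_diff: "mconst (a - b) = mconst a - mconst b" by (simp add: mconst_def single_diff)
lemma mconst_sum: "mconst (sum f A) = (\<Sum>x\<in>A. mconst (f x))"
  by (induction A rule: infinite_finite_induct) (simp_all add: mconst_add)

lemma mon_deg_sup:
  assumes "finite S" "Poly_Mapping.keys m \<subseteq> S"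
  shows "mon_deg m = (\<Sum>x\<in>S. Poly_Mapping.lookup m x)"
  unfolding mon_deg_def by (rule sum.mono_neutral_left) (use assms in \<open>auto simp: in_keys_iff\<close>)

lemma mon_deg_add: "mon_deg (a + b) = mon_deg a + mon_deg b"
proof -
  let ?S = "Poly_Mapping.keys a \<union> Poly_Mapping.keys b"
  have f: "finite ?S" by simp
  have "mon_deg (a + b) = (\<Sum>x\<in>?S. Poly_Mapping.lookup (a + b) x)"
    by (rule mon_deg_sup[OF f]) (use keys_add[of a b] in auto)
  also have "\<dots> = (\<Sum>x\<in>?S. Poly_Mapping.lookup a x) + (\<Sum>x\<in>?S. Poly_Mapping.lookup b x)"
    by (simp add: lookup_add sum.distrib)
  also have "\<dots> = mon_deg a + mon_deg b"
    by (simp add: mon_deg_sup[OF f])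
  finally show ?thesis .
qed

lemma mon_deg_0[simp]: "mon_deg 0 = 0" by (simp add: mon_deg_def)
lemma mon_deg_single[simp]: "mon_deg (Poly_Mapping.single x n) = n" by (simp add: mon_deg_def)

lemma tdeg_le_iff: "tdeg p \<le> D \<longleftrightarrow> (\<forall>m\<in>Poly_Mapping.keys p. mon_deg m \<le> D)"
  unfolding tdeg_def by (auto simp: Max_le_iff)

lemma tdeg_ge: "m \<in> Poly_Mapping.keys p \<Longrightarrow> mon_deg m \<le> tdeg p"
  using tdeg_le_iff[of p "tdeg p"] by blast

lemma tdeg_add: "tdeg p \<le> D \<Longrightarrow> tdeg q \<le> D \<Longrightarrow> tdeg (p + q) \<le> D"
  using keys_add[of p q] by (auto simp: tdeg_le_iff)

lemma tdeg_uminus[simp]: "tdeg (- p) = tdeg p" by (simp add: tdeg_def)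

lemma tdeg_diff: "tdeg p \<le> D \<Longrightarrow> tdeg q \<le> D \<Longrightarrow> tdeg (p - q) \<le> D"
  using keys_diff[of p q] by (auto simp: tdeg_le_iff)

lemma tdeg_sum: "(\<And>i. i \<in> A \<Longrightarrow> tdeg (f i) \<le> D) \<Longrightarrow> tdeg (sum f A) \<le> D"
  using keys_sum[of f A] by (auto simp: tdeg_le_iff)

lemma tdeg_mult: "tdeg (p * q) \<le> tdeg p + tdeg q"
proof -
  have "mon_deg m \<le> tdeg p + tdeg q" if mk: "m \<in> Poly_Mapping.keys (p * q)" for m
  proof -
    obtain a b where "m = a + b" "a \<in> Poly_Mapping.keys p" "b \<in> Poly_Mapping.keys q"
      using keys_mult[of p q] mk by blast
    thus ?thesis by (simp add: mon_deg_add add_mono tdeg_ge)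
  qed
  thus ?thesis by (simp add: tdeg_le_iff)
qed

lemma tdeg_mconst[simp]: "tdeg (mconst c) = 0"
  by (simp add: tdeg_def mconst_def)

lemma tdeg_0[simp]: "tdeg 0 = 0" by (simp add: tdeg_def)
lemma tdeg_1[simp]: "tdeg (1::('v,'a::comm_ring_1) mpoly) = 0" by (simp add: tdeg_def)

lemma tdeg_mvar: "tdeg (mvar x) \<le> 1"
  by (simp add: tdeg_def mvar_def)

lemma tdeg_mconst_mult: "tdeg (mconst c * p) \<le> tdeg p"
  using tdeg_mult[of "mconst c" p] by simp

lemma tdeg_power: "tdeg (p ^ n) \<le> n * tdeg p"
proof (induction n)
  case (Suc n)
  have "tdeg (p ^ Suc n) \<le> tdeg p + tdeg (p ^ n)" using tdeg_mult[of p "p ^ n"] by simp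
  thus ?case using Suc by simp
qed simp

lemma tdeg_prod: "tdeg (prod f A) \<le> (\<Sum>i\<in>A. tdeg (f i))"
proof (induction A rule: infinite_finite_induct)
  case (insert x F)
  have "tdeg (prod f (insert x F)) \<le> tdeg (f x) + tdeg (prod f F)"
    using insert tdeg_mult[of "f x" "prod f F"] by simp
  thus ?case using insert by simp
qed simp_all

lemma lookup_mvar_mult:
  "Poly_Mapping.lookup (mvar x * p) (Poly_Mapping.single x 1 + m) = Poly_Mapping.lookup p m"
  unfolding mvar_def lookup_mult lookup_single by (simp add: when_mult)

lemma tdeg_mvar_mult_ge:
  assumes "p \<noteq> 0"
  shows "tdeg p + 1 \<le> tdeg (mvar x * p)"
proof -
  have ne: "Poly_Mapping.keys p \<noteq> {}" using assms by simp
  obtain m where m: "m \<in> Poly_Mapping.keys p" "mon_deg m = tdeg p"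
  proof -
    have "Max (mon_deg ` Poly_Mapping.keys p) \<in> mon_deg ` Poly_Mapping.keys p"
      using ne by (intro Max_in) auto
    then obtain m where "m \<in> Poly_Mapping.keys p" "mon_deg m = Max (mon_deg ` Poly_Mapping.keys p)"
      by (metis (no_types, lifting) imageE)
    thus ?thesis using that ne unfolding tdeg_def by simp
  qed
  have "Poly_Mapping.single x 1 + m \<in> Poly_Mapping.keys (mvar x * p)"
    using m(1) lookup_mvar_mult[of x p m] by (simp add: in_keys_iff)
  hence "mon_deg (Poly_Mapping.single x 1 + m) \<le> tdeg (mvar x * p)" by (rule tdeg_ge)
  thus ?thesis using m by (simp add: mon_deg_add)
qed


inductive_set der :: "('w, 'b::field) mpoly set \<Rightarrow> nat \<Rightarrow> ('w, 'b) mpoly set" for S D where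
  ax: "p \<in> S \<Longrightarrow> tdeg p \<le> D \<Longrightarrow> p \<in> der S D"
| bo: "2 \<le> D \<Longrightarrow> mvar x ^ 2 - mvar x \<in> der S D"
| lin: "p \<in> der S D \<Longrightarrow> q \<in> der S D \<Longrightarrow> mconst a * p + mconst b * q \<in> der S D"
| mul: "p \<in> der S D \<Longrightarrow> tdeg (mvar x * p) \<le> D \<Longrightarrow> mvar x * p \<in> der S D"

lemma tdeg_bo: "tdeg (mvar x ^ 2 - mvar x :: ('v, 'a::comm_ring_1) mpoly) \<le> 2"
proof -
  have a: "tdeg (mvar x :: ('v, 'a) mpoly) \<le> 1" by (rule tdeg_mvar)
  have b: "tdeg (mvar x ^ 2 :: ('v, 'a) mpoly) \<le> 2 * tdeg (mvar x :: ('v, 'a) mpoly)" by (rule tdeg_power)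
  have aux: "(u::nat) \<le> 2 * v \<Longrightarrow> v \<le> 1 \<Longrightarrow> u \<le> 2" for u v by linarith
  have aux2: "(v::nat) \<le> 1 \<Longrightarrow> v \<le> 2" for v by linarith
  show ?thesis by (rule tdeg_diff[OF aux[OF b a] aux2[OF a]])
qed

lemma tdeg_lin: "tdeg p \<le> D \<Longrightarrow> tdeg q \<le> D \<Longrightarrow> tdeg (mconst a * p + mconst b * q) \<le> D"
  by (rule tdeg_add[OF le_trans[OF tdeg_mconst_mult] le_trans[OF tdeg_mconst_mult]])

lemma der_tdeg: "p \<in> der S D \<Longrightarrow> tdeg p \<le> D"
proof (induction rule: der.induct)
  case (bo x) thus ?case by (rule le_trans[OF tdeg_bo])
next
  case (lin p q a b) show ?case by (rule tdeg_lin[OF lin.IH])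
next
  case (ax p) thus ?case by simp
next
  case (mul p x) thus ?case by simp
qed

lemma pc_step_mono: "pc_step b S prev p \<Longrightarrow> set prev \<subseteq> set prev' \<Longrightarrow> pc_step b S prev' p"
  unfolding pc_step_def by blast

lemma pc_derivation_append:
  assumes "pc_derivation b S xs" "pc_derivation b S ys"
  shows "pc_derivation b S (xs @ ys)"
  unfolding pc_derivation_def
proof (intro allI impI)
  fix t assume t: "t < length (xs @ ys)"
  show "pc_step b S (take t (xs @ ys)) ((xs @ ys) ! t)"
  proof (cases "t < length xs")
    case True
    thus ?thesis using assms(1) by (simp add: pc_derivation_def nth_append)
  next
    case False
    hence "t - length xs < length ys" using t by simp
    hence "pc_step b S (take (t - length xs) ys) (ys ! (t - length xs))"
      using assms(2) by (simp add: pc_derivation_def)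
    moreover have "take t (xs @ ys) = xs @ take (t - length xs) ys"
      using False by simp
    hence "set (take (t - length xs) ys) \<subseteq> set (take t (xs @ ys))" by simp
    moreover have "(xs @ ys) ! t = ys ! (t - length xs)" using False by (simp add: nth_append)
    ultimately show ?thesis using pc_step_mono by metis
  qed
qed

lemma pc_derivation_single: "pc_step b S [] p \<Longrightarrow> pc_derivation b S [p]"
  by (simp add: pc_derivation_def)

lemma pc_derivation_snoc:
  "pc_derivation b S xs \<Longrightarrow> pc_step b S xs p \<Longrightarrow> pc_derivation b S (xs @ [p])"
  by (auto simp: pc_derivation_def nth_append less_Suc_eq)

lemma der_sound:
  "p \<in> der S D \<Longrightarrow> \<exists>ps. pc_derivation True S ps \<and> ps \<noteq> [] \<and> last ps = p \<and> (\<forall>q\<in>set ps. tdeg q \<le> D)"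
proof (induction rule: der.induct)
  case (ax p)
  have "pc_step True S [] p" unfolding pc_step_def using ax.hyps(1) by (rule disjI1)
  hence "pc_derivation True S [p]" by (rule pc_derivation_single)
  thus ?case using ax.hyps by (intro exI[of _ "[p]"]) simp
next
  case (bo x)
  have "pc_step True S [] (mvar x ^ 2 - mvar x)" unfolding pc_step_def
    by (intro disjI2) (rule conjI[OF TrueI exI[of _ x]], rule refl)
  hence "pc_derivation True S [mvar x ^ 2 - mvar x]" by (rule pc_derivation_single)
  moreover have "tdeg (mvar x ^ 2 - mvar x) \<le> D" by (rule le_trans[OF tdeg_bo bo.hyps])
  ultimately show ?case by (intro exI[of _ "[mvar x ^ 2 - mvar x]"]) simp
next
  case (lin p q a b)
  from lin.IH obtain ps1 ps2 where
    p1: "pc_derivation True S ps1" "ps1 \<noteq> []" "last ps1 = p" "\<forall>q\<in>set ps1. tdeg q \<le> D" and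
    p2: "pc_derivation True S ps2" "ps2 \<noteq> []" "last ps2 = q" "\<forall>q\<in>set ps2. tdeg q \<le> D"
    by blast
  have "p \<in> set (ps1 @ ps2)" "q \<in> set (ps1 @ ps2)" using p1 p2 by auto
  hence st: "pc_step True S (ps1 @ ps2) (mconst a * p + mconst b * q)"
    unfolding pc_step_def by blast
  have "tdeg (mconst a * p + mconst b * q) \<le> D"
    using der_tdeg[OF lin.hyps(1)] der_tdeg[OF lin.hyps(2)] by (rule tdeg_lin)
  moreover have "pc_derivation True S ((ps1 @ ps2) @ [mconst a * p + mconst b * q])"
    by (rule pc_derivation_snoc[OF pc_derivation_append[OF p1(1) p2(1)] st])
  ultimately show ?case using p1(4) p2(4)
    by (intro exI[of _ "(ps1 @ ps2) @ [mconst a * p + mconst b * q]"]) auto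
next
  case (mul p x)
  from mul.IH obtain ps where
    p1: "pc_derivation True S ps" "ps \<noteq> []" "last ps = p" "\<forall>q\<in>set ps. tdeg q \<le> D" by blast
  have "p \<in> set ps" using p1 by auto
  hence st: "pc_step True S ps (mvar x * p)" unfolding pc_step_def by blast
  have "pc_derivation True S (ps @ [mvar x * p])" by (rule pc_derivation_snoc[OF p1(1) st])
  thus ?case using p1(4) mul.hyps(2)
    by (intro exI[of _ "ps @ [mvar x * p]"]) auto
qed

lemma der_add: "p \<in> der S D \<Longrightarrow> q \<in> der S D \<Longrightarrow> p + q \<in> der S D"
  using der.lin[of p S D q 1 1] by simp

lemma der_smult: "p \<in> der S D \<Longrightarrow> mconst c * p \<in> der S D"
  using der.lin[of p S D p c 0] by simp

lemma der_zero: "p \<in> der S D \<Longrightarrow> 0 \<in> der S D"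
  using der_smult[of p S D 0] by simp

lemma der_uminus: "p \<in> der S D \<Longrightarrow> - p \<in> der S D"
  using der_smult[of p S D "-1"] by (simp add: mconst_uminus)

lemma der_diff: "p \<in> der S D \<Longrightarrow> q \<in> der S D \<Longrightarrow> p - q \<in> der S D"
  using der_add[of p S D "- q"] der_uminus[of q S D] by simp

lemma der_sum: "finite I \<Longrightarrow> z \<in> der S D \<Longrightarrow> (\<And>i. i \<in> I \<Longrightarrow> f i \<in> der S D) \<Longrightarrow> sum f I \<in> der S D"
proof (induction I rule: finite_induct)
  case empty thus ?case using der_zero by simp
next
  case (insert x F) thus ?case by (simp add: der_add)
qed

lemma der_lincomb: "finite I \<Longrightarrow> z \<in> der S D \<Longrightarrow> (\<And>i. i \<in> I \<Longrightarrow> f i \<in> der S D) \<Longrightarrow>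
    (\<Sum>i\<in>I. mconst (c i) * f i) \<in> der S D"
  by (rule der_sum) (auto intro: der_smult)

lemma tdeg_linf: "tdeg (\<Sum>j\<in>J. mconst (c j) * mvar (x j)) \<le> 1"
  by (rule tdeg_sum) (rule le_trans[OF tdeg_mconst_mult tdeg_mvar])

lemma der_mult_linf:
  fixes p :: "('w, 'b::field) mpoly"
  assumes "finite J" "p \<in> der S D" "tdeg p + 1 \<le> D"
  shows "(\<Sum>j\<in>J. mconst (c j) * mvar (x j)) * p \<in> der S D"
proof -
  have "(\<Sum>j\<in>J. mconst (c j) * mvar (x j)) * p = (\<Sum>j\<in>J. mconst (c j) * (mvar (x j) * p))"
    by (simp add: sum_distrib_right mult.assoc)
  moreover have "mvar (x j) * p \<in> der S D" for j
  proof (rule der.mul[OF assms(2)])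
    show "tdeg (mvar (x j) * p) \<le> D"
      proof -
      have "tdeg (mvar (x j) :: ('w, 'b) mpoly) \<le> 1" by (rule tdeg_mvar)
      thus ?thesis using tdeg_mult[of "mvar (x j)" p] assms(3) by linarith
    qed
  qed
  ultimately show ?thesis using der_lincomb[OF assms(1,2)] by simp
qed

lemma der_mult_linf_pow:
  assumes "finite J" "p \<in> der S D" "tdeg p + n \<le> D"
  shows "(\<Sum>j\<in>J. mconst (c j) * mvar (x j)) ^ n * p \<in> der S D"
  using assms(3)
proof (induction n)
  case 0 thus ?case using assms(2) by simp
next
  case (Suc n)
  let ?L = "(\<Sum>j\<in>J. mconst (c j) * mvar (x j))"
  have IH: "?L ^ n * p \<in> der S D" using Suc by simp
  have a: "tdeg ?L \<le> 1" by (rule tdeg_linf)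
  have b: "tdeg (?L ^ n) \<le> n * tdeg ?L" by (rule tdeg_power)
  have c: "n * tdeg ?L \<le> n" using mult_le_mono2[OF a, of n] by simp
  have "tdeg (?L ^ n * p) \<le> n + tdeg p"
    using tdeg_mult[of "?L ^ n" p] b c by linarith
  hence "tdeg (?L ^ n * p) + 1 \<le> D" using Suc.prems by simp
  hence "?L * (?L ^ n * p) \<in> der S D" by (rule der_mult_linf[OF assms(1) IH])
  thus ?case by (simp add: mult.assoc)
qed


definition Mon :: "('v \<Rightarrow> ('w, 'a::field alg_closure) mpoly) \<Rightarrow> ('v \<Rightarrow>\<^sub>0 nat) \<Rightarrow> ('w, 'a alg_closure) mpoly" where
  "Mon L m = (\<Prod>v\<in>Poly_Mapping.keys m. L v ^ Poly_Mapping.lookup m v)"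

definition phi :: "('v \<Rightarrow> ('w, 'a::field alg_closure) mpoly) \<Rightarrow> ('v, 'a) mpoly \<Rightarrow> ('w, 'a alg_closure) mpoly" where
  "phi L p = (\<Sum>m\<in>Poly_Mapping.keys p. mconst (to_ac (Poly_Mapping.lookup p m)) * Mon L m)"

lemma Mon_sup:
  assumes "finite S" "Poly_Mapping.keys m \<subseteq> S"
  shows "Mon L m = (\<Prod>v\<in>S. L v ^ Poly_Mapping.lookup m v)"
  unfolding Mon_def by (rule prod.mono_neutral_left) (use assms in \<open>auto simp: in_keys_iff\<close>)

lemma Mon_add: "Mon L (a + b) = Mon L a * Mon L b"
proof -
  let ?S = "Poly_Mapping.keys a \<union> Poly_Mapping.keys b"
  have f: "finite ?S" by simp
  have "Mon L (a + b) = (\<Prod>v\<in>?S. L v ^ Poly_Mapping.lookup (a + b) v)"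
    by (rule Mon_sup[OF f]) (use keys_add[of a b] in auto)
  also have "\<dots> = (\<Prod>v\<in>?S. L v ^ Poly_Mapping.lookup a v) * (\<Prod>v\<in>?S. L v ^ Poly_Mapping.lookup b v)"
    by (simp add: lookup_add power_add prod.distrib)
  also have "\<dots> = Mon L a * Mon L b"
    by (simp add: Mon_sup[OF f])
  finally show ?thesis .
qed

lemma Mon_0[simp]: "Mon L 0 = 1" by (simp add: Mon_def)
lemma Mon_single[simp]: "Mon L (Poly_Mapping.single v 1) = L v" by (simp add: Mon_def)

lemma phi_sup:
  assumes "finite S" "Poly_Mapping.keys p \<subseteq> S"
  shows "phi L p = (\<Sum>m\<in>S. mconst (to_ac (Poly_Mapping.lookup p m)) * Mon L m)"
  unfolding phi_def by (rule sum.mono_neutral_left) (use assms in \<open>auto simp: in_keys_iff\<close>)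

lemma phi_add: "phi L (p + q) = phi L p + phi L q"
proof -
  let ?S = "Poly_Mapping.keys p \<union> Poly_Mapping.keys q"
  have f: "finite ?S" by simp
  have "phi L (p + q) = (\<Sum>m\<in>?S. mconst (to_ac (Poly_Mapping.lookup (p + q) m)) * Mon L m)"
    by (rule phi_sup[OF f]) (use keys_add[of p q] in auto)
  also have "\<dots> = (\<Sum>m\<in>?S. mconst (to_ac (Poly_Mapping.lookup p m)) * Mon L m) +
                  (\<Sum>m\<in>?S. mconst (to_ac (Poly_Mapping.lookup q m)) * Mon L m)"
    by (simp add: lookup_add mconst_add distrib_right sum.distrib)
  also have "\<dots> = phi L p + phi L q"
    by (simp add: phi_sup[OF f])
  finally show ?thesis .
qed

lemma phi_0[simp]: "phi L 0 = 0" by (simp add: phi_def)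

lemma phi_uminus: "phi L (- p) = - phi L p"
  by (simp add: phi_def lookup_uminus mconst_uminus sum_negf)

lemma phi_diff: "phi L (p - q) = phi L p - phi L q"
  using phi_add[of L p "- q"] by (simp add: phi_uminus)

lemma phi_sum: "phi L (sum f A) = (\<Sum>x\<in>A. phi L (f x))"
  by (induction A rule: infinite_finite_induct) (simp_all add: phi_add)

lemma phi_single: "phi L (Poly_Mapping.single m c) = mconst (to_ac c) * Mon L m"
proof -
  have "phi L (Poly_Mapping.single m c) = (\<Sum>m'\<in>{m}. mconst (to_ac (Poly_Mapping.lookup (Poly_Mapping.single m c) m')) * Mon L m')"
    by (rule phi_sup) auto
  thus ?thesis by simp
qed

lemma poly_expand: "p = (\<Sum>m\<in>Poly_Mapping.keys p. Poly_Mapping.single m (Poly_Mapping.lookup p m))"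
proof (rule poly_mapping_eqI)
  fix k
  have "Poly_Mapping.lookup (\<Sum>m\<in>Poly_Mapping.keys p. Poly_Mapping.single m (Poly_Mapping.lookup p m)) k
      = (\<Sum>m\<in>Poly_Mapping.keys p. (if m = k then Poly_Mapping.lookup p m else 0))"
    by (simp add: lookup_sum lookup_single when_def)
  also have "\<dots> = Poly_Mapping.lookup p k"
    by (simp add: sum.delta' in_keys_iff)
  finally show "Poly_Mapping.lookup p k = Poly_Mapping.lookup (\<Sum>m\<in>Poly_Mapping.keys p. Poly_Mapping.single m (Poly_Mapping.lookup p m)) k" by simp
qed

lemma phi_mult: "phi L (p * q) = phi L p * phi L q"
proof -
  let ?P = "Poly_Mapping.keys p" and ?Q = "Poly_Mapping.keys q"
  let ?lp = "Poly_Mapping.lookup p" and ?lq = "Poly_Mapping.lookup q"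
  have "p * q = (\<Sum>m1\<in>?P. Poly_Mapping.single m1 (?lp m1)) * (\<Sum>m2\<in>?Q. Poly_Mapping.single m2 (?lq m2))"
    using poly_expand[of p] poly_expand[of q] by simp
  also have "\<dots> = (\<Sum>m1\<in>?P. \<Sum>m2\<in>?Q. Poly_Mapping.single (m1 + m2) (?lp m1 * ?lq m2))"
    by (simp add: sum_product mult_single)
  finally have pq: "p * q = \<dots>" .
  have "phi L (p * q) = (\<Sum>m1\<in>?P. \<Sum>m2\<in>?Q. mconst (to_ac (?lp m1)) * Mon L m1 * (mconst (to_ac (?lq m2)) * Mon L m2))"
    by (simp add: pq phi_sum phi_single mconst_mult Mon_add ac_simps)
  also have "\<dots> = phi L p * phi L q"
    by (simp add: phi_def sum_product)
  finally show ?thesis .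
qed

lemma phi_one[simp]: "phi L 1 = 1"
  using phi_single[of L 0 1] by simp

lemma phi_mconst: "phi L (mconst c) = mconst (to_ac c)"
  using phi_single[of L 0 c] by (simp add: mconst_def)

lemma phi_mvar: "phi L (mvar v) = L v"
  by (simp only: mvar_def phi_single Mon_single to_ac_1 mconst_1 mult_1_left)

lemma phi_power: "phi L (p ^ n) = phi L p ^ n"
  by (induction n) (simp_all add: phi_mult)

lemma tdeg_Mon:
  assumes "\<And>v. tdeg (L v) \<le> 1"
  shows "tdeg (Mon L m) \<le> mon_deg m"
proof -
  have "tdeg (Mon L m) \<le> (\<Sum>v\<in>Poly_Mapping.keys m. tdeg (L v ^ Poly_Mapping.lookup m v))"
    unfolding Mon_def by (rule tdeg_prod)
  also have "\<dots> \<le> (\<Sum>v\<in>Poly_Mapping.keys m. Poly_Mapping.lookup m v)"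
  proof (rule sum_mono)
    fix v
    have "tdeg (L v ^ Poly_Mapping.lookup m v) \<le> Poly_Mapping.lookup m v * tdeg (L v)" by (rule tdeg_power)
    also have "\<dots> \<le> Poly_Mapping.lookup m v" using mult_le_mono2[OF assms[of v]] by simp
    finally show "tdeg (L v ^ Poly_Mapping.lookup m v) \<le> Poly_Mapping.lookup m v" .
  qed
  finally show ?thesis by (simp add: mon_deg_def)
qed

lemma tdeg_phi:
  assumes "\<And>v. tdeg (L v) \<le> 1"
  shows "tdeg (phi L p) \<le> tdeg p"
  unfolding phi_def
proof (rule tdeg_sum)
  fix m assume m: "m \<in> Poly_Mapping.keys p"
  have "tdeg (mconst (to_ac (Poly_Mapping.lookup p m)) * Mon L m) \<le> tdeg (Mon L m)" by (rule tdeg_mconst_mult)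
  also have "\<dots> \<le> mon_deg m" by (rule tdeg_Mon[OF assms])
  also have "\<dots> \<le> tdeg p" by (rule tdeg_ge[OF m])
  finally show "tdeg (mconst (to_ac (Poly_Mapping.lookup p m)) * Mon L m) \<le> tdeg p" .
qed


definition lf :: "nat \<Rightarrow> (nat \<Rightarrow> 'b::field) \<Rightarrow> 'v \<Rightarrow> ('v \<times> nat, 'b) mpoly" where
  "lf k c v = (\<Sum>j\<in>{1..k}. mconst (c j) * mvar (v, j))"

lemma tdeg_lf: "tdeg (lf k c v) \<le> 1"
  unfolding lf_def by (rule tdeg_linf)

lemma tdeg_lf_pow_diff: "tdeg (lf k c v ^ n - lf k c' v) \<le> n + 1"
proof -
  have "tdeg (lf k c v ^ n) \<le> n * tdeg (lf k c v)" by (rule tdeg_power)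
  also have "\<dots> \<le> n" using mult_le_mono2[OF tdeg_lf[of k c v], of n] by simp
  finally have a: "tdeg (lf k c v ^ n) \<le> n + 1" by simp
  have b: "tdeg (lf k c' v) \<le> n + 1" using tdeg_lf[of k c' v] by simp
  show ?thesis by (rule tdeg_diff[OF a b])
qed

lemma der_mult_lf:
  "p \<in> der S D \<Longrightarrow> tdeg p + 1 \<le> D \<Longrightarrow> lf k c v * p \<in> der S D"
  unfolding lf_def by (rule der_mult_linf) simp_all

lemma der_mult_lf_pow:
  "p \<in> der S D \<Longrightarrow> tdeg p + n \<le> D \<Longrightarrow> lf k c v ^ n * p \<in> der S D"
  unfolding lf_def by (rule der_mult_linf_pow) simp_all

lemma tdeg_mvar2: "tdeg (mvar a * mvar b :: ('w, 'b::comm_ring_1) mpoly) \<le> 2"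
proof -
  have "tdeg (mvar a :: ('w, 'b) mpoly) \<le> 1" "tdeg (mvar b :: ('w, 'b) mpoly) \<le> 1" by (rule tdeg_mvar)+
  thus ?thesis using tdeg_mult[of "mvar a :: ('w, 'b) mpoly" "mvar b"] by linarith
qed

lemma x_vertex_ax: "v \<in> V \<Longrightarrow> (\<Sum>j\<in>{1..k}. mvar (v, j)) - 1 \<in> x_system V E k"
  unfolding x_system_def by blast

lemma x_pair_ax: "v \<in> V \<Longrightarrow> j \<in> {1..k} \<Longrightarrow> j' \<in> {1..k} \<Longrightarrow> j \<noteq> j' \<Longrightarrow>
    mvar (v, j) * mvar (v, j') \<in> x_system V E k"
  unfolding x_system_def by blast

lemma x_edge_ax: "{u, v} \<in> E \<Longrightarrow> j \<in> {1..k} \<Longrightarrow> mvar (u, j) * mvar (v, j) \<in> x_system V E k"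
  unfolding x_system_def by blast

lemma x_vertex_der:
  assumes "v \<in> V" "1 \<le> D"
  shows "(\<Sum>j\<in>{1..k}. mvar (v, j)) - 1 \<in> der (x_system V E k :: ('v \<times> nat, 'b::field) mpoly set) D"
proof (rule der.ax[OF x_vertex_ax[OF assms(1)]])
  have "tdeg (\<Sum>j\<in>{1..k}. mvar (v, j) :: ('v \<times> nat, 'b) mpoly) \<le> 1"
    by (rule tdeg_sum) (rule tdeg_mvar)
  moreover have "tdeg (1 :: ('v \<times> nat, 'b) mpoly) \<le> 1" by simp
  ultimately have "tdeg ((\<Sum>j\<in>{1..k}. mvar (v, j)) - 1 :: ('v \<times> nat, 'b) mpoly) \<le> 1" by (rule tdeg_diff)
  thus "tdeg ((\<Sum>j\<in>{1..k}. mvar (v, j)) - 1 :: ('v \<times> nat, 'b) mpoly) \<le> D" using assms(2) by linarith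
qed

lemma lf_square_id:
  fixes a :: "nat \<Rightarrow> 'b::field" and v :: 'v
  shows "lf k a v * lf k (\<lambda>j. a j ^ n) v - lf k (\<lambda>j. a j ^ Suc n) v =
   (\<Sum>j\<in>{1..k}. \<Sum>j'\<in>{1..k}-{j}. mconst (a j * a j' ^ n) * (mvar (v, j) * mvar (v, j'))) +
   (\<Sum>j\<in>{1..k}. mconst (a j ^ Suc n) * (mvar (v, j) ^ 2 - mvar (v, j)))"
proof -
  let ?J = "{1..k::nat}"
  let ?F = "\<lambda>j j'. mconst (a j * a j' ^ n) * (mvar (v, j) * mvar (v, j') :: ('v \<times> nat, 'b) mpoly)"
  have 1: "lf k a v * lf k (\<lambda>j. a j ^ n) v = (\<Sum>j\<in>?J. \<Sum>j'\<in>?J. ?F j j')"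
    unfolding lf_def sum_product by (simp add: mconst_mult ac_simps)
  have 2: "(\<Sum>j'\<in>?J. ?F j j') = mconst (a j ^ Suc n) * mvar (v, j) ^ 2 + (\<Sum>j'\<in>?J-{j}. ?F j j')"
    if "j \<in> ?J" for j
    using that by (simp add: sum.remove power2_eq_square)
  have "lf k a v * lf k (\<lambda>j. a j ^ n) v =
      (\<Sum>j\<in>?J. mconst (a j ^ Suc n) * mvar (v, j) ^ 2) + (\<Sum>j\<in>?J. \<Sum>j'\<in>?J-{j}. ?F j j')"
  proof -
    have 3: "(\<Sum>j\<in>?J. \<Sum>j'\<in>?J. ?F j j') = (\<Sum>j\<in>?J. mconst (a j ^ Suc n) * mvar (v, j) ^ 2 + (\<Sum>j'\<in>?J-{j}. ?F j j'))"
      by (rule sum.cong[OF refl]) (rule 2)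
    show ?thesis unfolding 1 3 by (simp only: sum.distrib)
  qed
  moreover have "(\<Sum>j\<in>?J. mconst (a j ^ Suc n) * (mvar (v, j) ^ 2 - mvar (v, j))) =
      (\<Sum>j\<in>?J. mconst (a j ^ Suc n) * mvar (v, j) ^ 2) - lf k (\<lambda>j. a j ^ Suc n) v"
    unfolding lf_def by (simp add: right_diff_distrib sum_subtractf)
  ultimately show ?thesis by (simp add: algebra_simps)
qed

lemma vertex_P:
  fixes a :: "nat \<Rightarrow> 'b::field" and v :: 'v
  assumes v: "v \<in> V" and D: "2 * k \<le> D" and k: "k > 0" and n: "n \<le> k"
  shows "lf k a v ^ n - lf k (\<lambda>j. a j ^ n) v \<in> der (x_system V E k) D"
  using n
proof (induction n)
  case 0
  have A: "(\<Sum>j\<in>{1..k}. mvar (v, j)) - 1 \<in> der (x_system V E k :: ('v \<times> nat, 'b) mpoly set) D"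
    by (rule x_vertex_der[OF v]) (use D k in linarith)
  have "lf k a v ^ 0 - lf k (\<lambda>j. a j ^ 0) v = - ((\<Sum>j\<in>{1..k}. mvar (v, j)) - 1 :: ('v \<times> nat, 'b) mpoly)"
    by (simp add: lf_def)
  thus ?case using der_uminus[OF A] by simp
next
  case (Suc n)
  let ?X = "x_system V E k :: ('v \<times> nat, 'b) mpoly set"
  have A: "(\<Sum>j\<in>{1..k}. mvar (v, j)) - 1 \<in> der ?X D"
    by (rule x_vertex_der[OF v]) (use D k in linarith)
  have IH: "lf k a v ^ n - lf k (\<lambda>j. a j ^ n) v \<in> der ?X D" using Suc by simp
  have "lf k a v * (lf k a v ^ n - lf k (\<lambda>j. a j ^ n) v) \<in> der ?X D"
  proof (rule der_mult_lf[OF IH])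
    show "tdeg (lf k a v ^ n - lf k (\<lambda>j. a j ^ n) v) + 1 \<le> D"
      using tdeg_lf_pow_diff[of k a v n "\<lambda>j. a j ^ n"] Suc.prems D by linarith
  qed
  moreover have "lf k a v * lf k (\<lambda>j. a j ^ n) v - lf k (\<lambda>j. a j ^ Suc n) v \<in> der ?X D"
  proof -
    have "(\<Sum>j\<in>{1..k}. \<Sum>j'\<in>{1..k}-{j}. mconst (a j * a j' ^ n) * (mvar (v, j) * mvar (v, j'))) \<in> der ?X D"
    proof (rule der_sum[OF _ A])
      fix j assume j: "j \<in> {1..k}"
      show "(\<Sum>j'\<in>{1..k}-{j}. mconst (a j * a j' ^ n) * (mvar (v, j) * mvar (v, j'))) \<in> der ?X D"
      proof (rule der_lincomb[OF _ A])
        fix j' assume j': "j' \<in> {1..k} - {j}"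
        show "mvar (v, j) * mvar (v, j') \<in> der ?X D"
        proof (rule der.ax)
          show "mvar (v, j) * mvar (v, j') \<in> ?X" using j j' v by (intro x_pair_ax) auto
          show "tdeg (mvar (v, j) * mvar (v, j') :: ('v \<times> nat, 'b) mpoly) \<le> D"
            using tdeg_mvar2[of "(v, j)" "(v, j')", where 'b='b] D k by linarith
        qed
      qed simp
    qed simp
    moreover have "(\<Sum>j\<in>{1..k}. mconst (a j ^ Suc n) * (mvar (v, j) ^ 2 - mvar (v, j))) \<in> der ?X D"
      by (rule der_lincomb[OF _ A]) (use D k in \<open>auto intro: der.bo\<close>)
    ultimately show ?thesis unfolding lf_square_id by (rule der_add)
  qed
  ultimately have "lf k a v * (lf k a v ^ n - lf k (\<lambda>j. a j ^ n) v) +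
     (lf k a v * lf k (\<lambda>j. a j ^ n) v - lf k (\<lambda>j. a j ^ Suc n) v) \<in> der ?X D" by (rule der_add)
  thus ?case by (simp add: algebra_simps)
qed


lemma vertex_img:
  fixes w :: "'b::field" and v :: 'v
  assumes v: "v \<in> V" and D: "2 * k \<le> D" and k: "k > 0" and wk: "w ^ k = 1"
  shows "lf k (\<lambda>j. w ^ j) v ^ k - 1 \<in> der (x_system V E k) D"
proof -
  let ?X = "x_system V E k :: ('v \<times> nat, 'b) mpoly set"
  have P: "lf k (\<lambda>j. w ^ j) v ^ k - lf k (\<lambda>j. (w ^ j) ^ k) v \<in> der ?X D"
    by (rule vertex_P[OF v D k]) simp
  have "(w ^ j) ^ k = 1" for j by (metis power_mult mult.commute power_one wk)
  hence L: "lf k (\<lambda>j. (w ^ j) ^ k) v = (\<Sum>j\<in>{1..k}. mvar (v, j))" by (simp add: lf_def)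
  have A: "(\<Sum>j\<in>{1..k}. mvar (v, j)) - 1 \<in> der ?X D"
    by (rule x_vertex_der[OF v]) (use D k in linarith)
  have B: "lf k (\<lambda>j. (w ^ j) ^ k) v - 1 \<in> der ?X D" unfolding L by (rule A)
  have "(lf k (\<lambda>j. w ^ j) v ^ k - lf k (\<lambda>j. (w ^ j) ^ k) v) + (lf k (\<lambda>j. (w ^ j) ^ k) v - 1) \<in> der ?X D"
    by (rule der_add[OF P B])
  thus ?thesis by simp
qed

lemma root_neq:
  fixes w :: "'b::field"
  assumes w: "primitive_root_of_unity k w" and k: "k > 0" and c: "1 \<le> c" "c < c'" "c' \<le> k"
  shows "w ^ c \<noteq> w ^ c'"
proof
  assume eq: "w ^ c = w ^ c'"
  have w0: "w \<noteq> 0" using w k unfolding primitive_root_of_unity_def by (metis zero_neq_one zero_power)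
  have "w ^ c' = w ^ c * w ^ (c' - c)" using c by (simp flip: power_add)
  hence "w ^ (c' - c) = 1" using eq w0 by simp
  moreover have "0 < c' - c" "c' - c < k" using c by auto
  ultimately show False using w by (auto simp: primitive_root_of_unity_def)
qed

lemma root_sum_zero:
  fixes w :: "'b::field"
  assumes w: "primitive_root_of_unity k w" and k: "k > 0"
    and c: "c \<in> {1..k}" "c' \<in> {1..k}" "c \<noteq> c'"
  shows "(\<Sum>i<k. (w ^ c) ^ i * (w ^ c') ^ (k - 1 - i)) = 0"
proof -
  have w0: "w \<noteq> 0" using w k unfolding primitive_root_of_unity_def by (metis zero_neq_one zero_power)
  have wk: "w ^ k = 1" using w by (simp add: primitive_root_of_unity_def)
  define a where "a = w ^ c"
  define b where "b = w ^ c'"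
  have b0: "b \<noteq> 0" using w0 by (simp add: b_def)
  have ab: "a \<noteq> b"
  proof (cases "c < c'")
    case True thus ?thesis using root_neq[OF w k] c by (auto simp: a_def b_def)
  next
    case False hence "c' < c" using c by simp
    thus ?thesis using root_neq[OF w k, of c' c] c by (auto simp: a_def b_def)
  qed
  define r where "r = a / b"
  have r1: "r \<noteq> 1" using ab b0 by (simp add: r_def)
  have "a ^ k = 1" "b ^ k = 1" unfolding a_def b_def by (metis power_mult mult.commute power_one wk)+
  hence rk: "r ^ k = 1" by (simp add: r_def power_divide)
  have "a ^ i * b ^ (k - 1 - i) = b ^ (k - 1) * r ^ i" if "i < k" for i
  proof -
    have "b ^ (k - 1) = b ^ (k - 1 - i) * b ^ i" using that by (simp flip: power_add)
    thus ?thesis using b0 by (simp add: r_def power_divide)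
  qed
  hence "(\<Sum>i<k. a ^ i * b ^ (k - 1 - i)) = b ^ (k - 1) * (\<Sum>i<k. r ^ i)"
    by (simp add: sum_distrib_left)
  also have "(\<Sum>i<k. r ^ i) = 0" using geometric_sum[OF r1, of k] rk by simp
  finally show ?thesis by (simp add: a_def b_def)
qed


lemma edge_img:
  fixes w :: "'b::field" and u v :: 'v
  assumes u: "u \<in> V" and v: "v \<in> V" and e: "{u, v} \<in> E" and D: "2 * k \<le> D" and k: "k > 0"
    and w: "primitive_root_of_unity k w"
  shows "(\<Sum>i<k. lf k (\<lambda>j. w ^ j) u ^ i * lf k (\<lambda>j. w ^ j) v ^ (k - 1 - i)) \<in> der (x_system V E k) D"
proof -
  let ?X = "x_system V E k :: ('v \<times> nat, 'b) mpoly set"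
  let ?a = "\<lambda>j::nat. w ^ j"
  let ?J = "{1..k}"
  define su where "su i = lf k (\<lambda>j. ?a j ^ i) u" for i
  define sv where "sv i = lf k (\<lambda>j. ?a j ^ i) v" for i
  define LL where "LL i = lf k ?a u ^ i * lf k ?a v ^ (k - 1 - i)" for i
  have A: "(\<Sum>j\<in>{1..k}. mvar (v, j)) - 1 \<in> der ?X D"
    by (rule x_vertex_der[OF v]) (use D k in linarith)
  have T: "LL i - su i * sv (k - 1 - i) \<in> der ?X D" if i: "i < k" for i
  proof -
    have P1: "lf k ?a u ^ i - su i \<in> der ?X D" unfolding su_def
      by (rule vertex_P[OF u D k]) (use i in simp)
    have P2: "lf k ?a v ^ (k - 1 - i) - sv (k - 1 - i) \<in> der ?X D" unfolding sv_def
      by (rule vertex_P[OF v D k]) simp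
    have 1: "lf k ?a v ^ (k - 1 - i) * (lf k ?a u ^ i - su i) \<in> der ?X D"
    proof (rule der_mult_lf_pow[OF P1])
      have "tdeg (lf k ?a u ^ i - su i) \<le> i + 1" unfolding su_def by (rule tdeg_lf_pow_diff)
      moreover have "i + 1 + (k - 1 - i) \<le> D" using i D by arith
      ultimately show "tdeg (lf k ?a u ^ i - su i) + (k - 1 - i) \<le> D" by linarith
    qed
    have 2: "su i * (lf k ?a v ^ (k - 1 - i) - sv (k - 1 - i)) \<in> der ?X D"
      unfolding su_def
    proof (rule der_mult_lf[OF P2])
      have "tdeg (lf k ?a v ^ (k - 1 - i) - sv (k - 1 - i)) \<le> (k - 1 - i) + 1" unfolding sv_def by (rule tdeg_lf_pow_diff)
      moreover have "(k - 1 - i) + 1 + 1 \<le> D" using i D k by arith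
      ultimately show "tdeg (lf k ?a v ^ (k - 1 - i) - sv (k - 1 - i)) + 1 \<le> D" by linarith
    qed
    have "LL i - su i * sv (k - 1 - i) = lf k ?a v ^ (k - 1 - i) * (lf k ?a u ^ i - su i) +
          su i * (lf k ?a v ^ (k - 1 - i) - sv (k - 1 - i))"
      unfolding LL_def by (simp add: algebra_simps)
    thus ?thesis using der_add[OF 1 2] by simp
  qed
  have S1: "(\<Sum>i<k. LL i - su i * sv (k - 1 - i)) \<in> der ?X D"
    by (rule der_sum[OF _ A]) (use T in auto)
  define M where "M c c' = (mvar (u, c) * mvar (v, c') :: ('v \<times> nat, 'b) mpoly)" for c c'
  define coef where "coef c c' = (\<Sum>i<k. ?a c ^ i * ?a c' ^ (k - 1 - i))" for c c'
  have prod: "su i * sv m = (\<Sum>c\<in>?J. \<Sum>c'\<in>?J. mconst (?a c ^ i * ?a c' ^ m) * M c c')" for i m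
    unfolding su_def sv_def lf_def sum_product M_def by (simp add: mconst_mult ac_simps)
  have "(\<Sum>i<k. su i * sv (k - 1 - i)) =
      (\<Sum>i<k. \<Sum>c\<in>?J. \<Sum>c'\<in>?J. mconst (?a c ^ i * ?a c' ^ (k - 1 - i)) * M c c')"
    by (simp add: prod)
  also have "\<dots> = (\<Sum>c\<in>?J. \<Sum>i<k. \<Sum>c'\<in>?J. mconst (?a c ^ i * ?a c' ^ (k - 1 - i)) * M c c')"
    by (rule sum.swap)
  also have "\<dots> = (\<Sum>c\<in>?J. \<Sum>c'\<in>?J. \<Sum>i<k. mconst (?a c ^ i * ?a c' ^ (k - 1 - i)) * M c c')"
    by (rule sum.cong[OF refl], rule sum.swap)
  also have "\<dots> = (\<Sum>c\<in>?J. \<Sum>c'\<in>?J. mconst (coef c c') * M c c')"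
    by (simp add: coef_def mconst_sum sum_distrib_right)
  also have "\<dots> = (\<Sum>c\<in>?J. mconst (coef c c) * M c c)"
  proof (rule sum.cong[OF refl])
    fix c assume c: "c \<in> ?J"
    have "(\<Sum>c'\<in>?J. mconst (coef c c') * M c c') = mconst (coef c c) * M c c + (\<Sum>c'\<in>?J-{c}. mconst (coef c c') * M c c')"
      using c by (simp add: sum.remove)
    also have "(\<Sum>c'\<in>?J-{c}. mconst (coef c c') * M c c') = 0"
    proof (rule sum.neutral, rule ballI)
      fix c' assume c': "c' \<in> ?J - {c}"
      have "coef c c' = 0" unfolding coef_def by (rule root_sum_zero[OF w k]) (use c c' in auto)
      thus "mconst (coef c c') * M c c' = 0" by simp
    qed
    finally show "(\<Sum>c'\<in>?J. mconst (coef c c') * M c c') = mconst (coef c c) * M c c" by simp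
  qed
  finally have ss: "(\<Sum>i<k. su i * sv (k - 1 - i)) = (\<Sum>c\<in>?J. mconst (coef c c) * M c c)" .
  have S2: "(\<Sum>i<k. su i * sv (k - 1 - i)) \<in> der ?X D"
    unfolding ss
  proof (rule der_lincomb[OF _ A])
    fix c assume c: "c \<in> ?J"
    show "M c c \<in> der ?X D" unfolding M_def
    proof (rule der.ax)
      show "mvar (u, c) * mvar (v, c) \<in> ?X" by (rule x_edge_ax[OF e c])
      show "tdeg (mvar (u, c) * mvar (v, c) :: ('v \<times> nat, 'b) mpoly) \<le> D"
        using tdeg_mvar2[of "(u, c)" "(v, c)", where 'b='b] D k by linarith
    qed
  qed simp
  have "(\<Sum>i<k. LL i) = (\<Sum>i<k. LL i - su i * sv (k - 1 - i)) + (\<Sum>i<k. su i * sv (k - 1 - i))"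
    by (simp add: sum_subtractf)
  hence "(\<Sum>i<k. LL i) \<in> der ?X D" using der_add[OF S1 S2] by simp
  thus ?thesis by (simp add: LL_def)
qed



theorem proposition2p2:
  fixes V :: "'v set" and E :: "'v set set" and k d :: nat
  assumes "simple_graph V E"
    and "k > 0"
    and "CHAR('a::field) = 0 \<or> \<not> CHAR('a) dvd k"
    and "pc_refutation False (y_system V E k :: ('v, 'a) mpoly set) d"
  shows "\<exists>w :: 'a alg_closure. primitive_root_of_unity k w \<and>
           pc_refutation True (x_system V E k :: ('v \<times> nat, 'a alg_closure) mpoly set) (max (2 * k) d)"
proof -
  have kne: "of_nat k \<noteq> (0 :: 'a alg_closure)"
  proof
    assume "of_nat k = (0::'a alg_closure)"
    hence "CHAR('a alg_closure) dvd k" by (simp only: of_nat_eq_0_iff_char_dvd)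
    hence "CHAR('a) dvd k" by simp
    thus False using assms(2,3) by auto
  qed
  obtain w :: "'a alg_closure" where w: "primitive_root_of_unity k w"
    using prim_root_exists[OF assms(2) kne] by blast
  have wk: "w ^ k = 1" using w by (simp add: primitive_root_of_unity_def)
  define D where "D = max (2 * k) d"
  define L where "L v = lf k (\<lambda>j. w ^ j) v" for v :: 'v
  let ?X = "x_system V E k :: ('v \<times> nat, 'a alg_closure) mpoly set"
  let ?Y = "y_system V E k :: ('v, 'a) mpoly set"
  from assms(4) obtain ps where ps: "pc_derivation False ?Y ps" "ps \<noteq> []" "last ps = 1"
      "\<forall>p\<in>set ps. tdeg p \<le> d"
    unfolding pc_refutation_def by blast
  have D2: "2 * k \<le> D" "d \<le> D" by (simp_all add: D_def)
  have tL: "tdeg (L v) \<le> 1" for v unfolding L_def by (rule tdeg_lf)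
  have main: "phi L (ps ! t) \<in> der ?X D" if "t < length ps" for t
    using that
  proof (induction t rule: less_induct)
    case (less t)
    have step: "pc_step False ?Y (take t ps) (ps ! t)"
      using ps(1) less.prems unfolding pc_derivation_def by blast
    have prev: "phi L q \<in> der ?X D" if q: "q \<in> set (take t ps)" for q
    proof -
      obtain i where i: "i < length (take t ps)" "take t ps ! i = q"
        using q by (auto simp: in_set_conv_nth)
      have "i < t" "i < length ps" using i by auto
      moreover have "q = ps ! i" using i by auto
      ultimately show ?thesis using less.IH less.prems by auto
    qed
    have pt: "tdeg (ps ! t) \<le> d" using ps(4) less.prems by simp
    from step consider (ax) "ps ! t \<in> ?Y"
      | (lin) q r \<alpha> \<beta> where "q \<in> set (take t ps)" "r \<in> set (take t ps)" "ps ! t = mconst \<alpha> * q + mconst \<beta> * r"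
      | (mul) q x where "q \<in> set (take t ps)" "ps ! t = mvar x * q"
      unfolding pc_step_def by blast
    then show ?case
    proof cases
      case ax
      then consider (vx) v where "v \<in> V" "ps ! t = mvar v ^ k - 1"
        | (ed) u v where "{u, v} \<in> E" "ps ! t = (\<Sum>j<k. mvar u ^ j * mvar v ^ (k - 1 - j))"
        unfolding y_system_def by blast
      then show ?thesis
      proof cases
        case vx
        have "phi L (ps ! t) = L v ^ k - 1" using vx(2) by (simp add: phi_diff phi_power phi_mvar)
        moreover have "lf k (\<lambda>j. w ^ j) v ^ k - 1 \<in> der ?X D" by (rule vertex_img[OF vx(1) D2(1) assms(2) wk])
        hence "L v ^ k - 1 \<in> der ?X D" by (simp only: L_def)
        ultimately show ?thesis by simp
      next
        case ed
        have "{u, v} \<subseteq> V" using ed(1) assms(1) unfolding simple_graph_def by blast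
        hence uv: "u \<in> V" "v \<in> V" by auto
        have "phi L (ps ! t) = (\<Sum>j<k. L u ^ j * L v ^ (k - 1 - j))"
          using ed(2) by (simp add: phi_sum phi_mult phi_power phi_mvar)
        moreover have "(\<Sum>j<k. lf k (\<lambda>j. w ^ j) u ^ j * lf k (\<lambda>j. w ^ j) v ^ (k - 1 - j)) \<in> der ?X D"
          by (rule edge_img[OF uv ed(1) D2(1) assms(2) w])
        hence "(\<Sum>j<k. L u ^ j * L v ^ (k - 1 - j)) \<in> der ?X D" by (simp only: L_def)
        ultimately show ?thesis by simp
      qed
    next
      case lin
      have "phi L (ps ! t) = mconst (to_ac \<alpha>) * phi L q + mconst (to_ac \<beta>) * phi L r"
        using lin(3) by (simp add: phi_add phi_mult phi_mconst)
      thus ?thesis using der.lin[OF prev[OF lin(1)] prev[OF lin(2)]] by simp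
    next
      case mul
      have eq: "phi L (ps ! t) = L x * phi L q" using mul(2) by (simp add: phi_mult phi_mvar)
      show ?thesis
      proof (cases "q = 0")
        case True
        thus ?thesis using eq der_zero[OF prev[OF mul(1)]] by simp
      next
        case False
        have "tdeg q + 1 \<le> tdeg (ps ! t)" using tdeg_mvar_mult_ge[OF False, of x] mul(2) by simp
        moreover have "tdeg (phi L q) \<le> tdeg q" by (rule tdeg_phi[OF tL])
        ultimately have "tdeg (phi L q) + 1 \<le> D" using pt D2 by linarith
        hence "lf k (\<lambda>j. w ^ j) x * phi L q \<in> der ?X D" by (rule der_mult_lf[OF prev[OF mul(1)]])
        hence "L x * phi L q \<in> der ?X D" by (simp only: L_def[of x])
        thus ?thesis using eq by simp
      qed
    qed
  qed
  have "phi L (ps ! (length ps - 1)) \<in> der ?X D" using main ps(2) by simp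
  moreover have "ps ! (length ps - 1) = 1" using ps(2,3) by (simp add: last_conv_nth)
  ultimately have "1 \<in> der ?X D" by simp
  hence "pc_refutation True ?X D" unfolding pc_refutation_def using der_sound by blast
  thus ?thesis using w unfolding D_def by blast
qed

end
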